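(* Let $A=B[x;\alpha,\delta]_p$ be a Poisson polynomial algebra over a field $k$ of characteristic zero, with $\delta$ locally nilpotent and $\alpha\delta=\delta(\alpha+s)$ for some $s\in k^\times$, and let $\theta:B\to B[x^{\pm1}]$ be given by $\theta(b)=\sum_{n\ge0}\frac{1}{n!}\left(\frac{-1}{s}\right)^n\delta^n(b)x^{-n}$. Then $\theta$ extends uniquely to an isomorphism of Poisson Laurent polynomial algebras $\theta:B[y^{\pm1};\alpha]_p\to B[x^{\pm1};\alpha,\delta]_p$ such that $\theta(y)=x$.
   Context: If $B$ is a Poisson algebra, $\alpha$ a Poisson derivation of $B$ and $\delta$ a derivation of $B$ with $\delta(\{a,b\})=\{\delta(a),b\}+\{a,\delta(b)\}+\alpha(a)\delta(b)-\delta(a)\alpha(b)$ for $a,b\in B$, then $B[x;\alpha,\delta]_p$ is $B[x]$ with the unique Poisson bracket extending that of $B$ with $\{x,b\}=\alpha(b)x+\delta(b)$, and $B[x^{\pm1};\alpha,\delta]_p$ is the unique extension of this Poisson structure to $B[x^{\pm1}]$. $B[y^{\pm1};\alpha]_p$ denotes $B[y^{\pm1};\alpha,0]_p$, i.e. $\{y,b\}=\alpha(b)y$. *)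

theory Defs
  imports "HOL-Computational_Algebra.Formal_Laurent_Series"
begin

text \<open>A Poisson algebra over the field k, where the k-algebra structure on the
commutative ring is given by the ring homomorphism iota from k.\<close>

definition k_algebra_hom :: "('k::field \<Rightarrow> 'b::comm_ring_1) \<Rightarrow> bool" where
  "k_algebra_hom \<iota> \<longleftrightarrow> \<iota> 1 = 1 \<and> (\<forall>c d. \<iota> (c + d) = \<iota> c + \<iota> d) \<and> (\<forall>c d. \<iota> (c * d) = \<iota> c * \<iota> d)"

definition subring_on :: "'b::comm_ring_1 set \<Rightarrow> bool" where
  "subring_on S \<longleftrightarrow> 0 \<in> S \<and> 1 \<in> S \<and> (\<forall>a\<in>S. \<forall>b\<in>S. a + b \<in> S \<and> a * b \<in> S \<and> - a \<in> S)"

definition poisson_on :: "'b::comm_ring_1 set \<Rightarrow> ('k::field \<Rightarrow> 'b) \<Rightarrow> ('b \<Rightarrow> 'b \<Rightarrow> 'b) \<Rightarrow> bool" where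
  "poisson_on S \<iota> P \<longleftrightarrow>
     subring_on S \<and> (\<forall>c. \<iota> c \<in> S) \<and>
     (\<forall>a\<in>S. \<forall>b\<in>S. P a b \<in> S) \<and>
     (\<forall>a\<in>S. \<forall>a'\<in>S. \<forall>b\<in>S. P (a + a') b = P a b + P a' b) \<and>
     (\<forall>c. \<forall>a\<in>S. \<forall>b\<in>S. P (\<iota> c * a) b = \<iota> c * P a b) \<and>
     (\<forall>a\<in>S. \<forall>b\<in>S. P a b = - P b a) \<and>
     (\<forall>a\<in>S. \<forall>b\<in>S. \<forall>c\<in>S. P a (P b c) + P b (P c a) + P c (P a b) = 0) \<and>
     (\<forall>a\<in>S. \<forall>b\<in>S. \<forall>c\<in>S. P a (b * c) = P a b * c + b * P a c)"

definition derivation :: "('k::field \<Rightarrow> 'b::comm_ring_1) \<Rightarrow> ('b \<Rightarrow> 'b) \<Rightarrow> bool" where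
  "derivation \<iota> D \<longleftrightarrow>
     (\<forall>a b. D (a + b) = D a + D b) \<and> (\<forall>c a. D (\<iota> c * a) = \<iota> c * D a) \<and>
     (\<forall>a b. D (a * b) = D a * b + a * D b)"

definition poisson_derivation :: "('k::field \<Rightarrow> 'b::comm_ring_1) \<Rightarrow> ('b \<Rightarrow> 'b \<Rightarrow> 'b) \<Rightarrow> ('b \<Rightarrow> 'b) \<Rightarrow> bool" where
  "poisson_derivation \<iota> P D \<longleftrightarrow> derivation \<iota> D \<and> (\<forall>a b. D (P a b) = P (D a) b + P a (D b))"

definition locally_nilpotent :: "('b::zero \<Rightarrow> 'b) \<Rightarrow> bool" where
  "locally_nilpotent D \<longleftrightarrow> (\<forall>b. \<exists>n. (D ^^ n) b = 0)"

text \<open>The Laurent polynomial ring B[x^{+-1}]: Laurent series with finite support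
(the variable is fls_X, its inverse fls_X_inv, B embedded via fls_const).\<close>
definition laurent_polys :: "'b::comm_ring_1 fls set" where
  "laurent_polys = {f. finite {n. fls_nth f n \<noteq> 0}}"

text \<open>B[x^{+-1}; alpha, delta]_p: a Poisson structure on B[x^{+-1}] extending that of B with
{x,b} = alpha(b) x + delta(b).\<close>
definition is_poisson_laurent :: "('k::field \<Rightarrow> 'b::comm_ring_1) \<Rightarrow> ('b \<Rightarrow> 'b \<Rightarrow> 'b) \<Rightarrow>
    ('b \<Rightarrow> 'b) \<Rightarrow> ('b \<Rightarrow> 'b) \<Rightarrow> ('b fls \<Rightarrow> 'b fls \<Rightarrow> 'b fls) \<Rightarrow> bool" where
  "is_poisson_laurent \<iota> P \<alpha> \<delta> Q \<longleftrightarrow>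
     poisson_on laurent_polys (\<lambda>c. fls_const (\<iota> c)) Q \<and>
     (\<forall>a b. Q (fls_const a) (fls_const b) = fls_const (P a b)) \<and>
     (\<forall>b. Q fls_X (fls_const b) = fls_const (\<alpha> b) * fls_X + fls_const (\<delta> b))"

definition poisson_iso_on :: "'b::comm_ring_1 set \<Rightarrow> ('k::field \<Rightarrow> 'b) \<Rightarrow> ('b \<Rightarrow> 'b \<Rightarrow> 'b) \<Rightarrow>
    ('b \<Rightarrow> 'b \<Rightarrow> 'b) \<Rightarrow> ('b \<Rightarrow> 'b) \<Rightarrow> bool" where
  "poisson_iso_on S \<iota> P1 P2 \<Theta> \<longleftrightarrow>
     bij_betw \<Theta> S S \<and> \<Theta> 1 = 1 \<and>
     (\<forall>f\<in>S. \<forall>g\<in>S. \<Theta> (f + g) = \<Theta> f + \<Theta> g \<and> \<Theta> (f * g) = \<Theta> f * \<Theta> g) \<and>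
     (\<forall>c. \<forall>f\<in>S. \<Theta> (\<iota> c * f) = \<iota> c * \<Theta> f) \<and>
     (\<forall>f\<in>S. \<forall>g\<in>S. \<Theta> (P1 f g) = P2 (\<Theta> f) (\<Theta> g))"

text \<open>theta(b) = sum_{n>=0} (1/n!) (-1/s)^n delta^n(b) x^{-n}; the sum is over the (finitely many,
by local nilpotence) n with delta^n(b) nonzero.\<close>
definition theta_map :: "('k::field_char_0 \<Rightarrow> 'b::comm_ring_1) \<Rightarrow> ('b \<Rightarrow> 'b) \<Rightarrow> 'k \<Rightarrow> 'b \<Rightarrow> 'b fls" where
  "theta_map \<iota> \<delta> s b =
     (\<Sum>n | (\<delta> ^^ n) b \<noteq> 0.
        fls_const (\<iota> (inverse (fact n) * (- inverse s) ^ n) * (\<delta> ^^ n) b) * fls_X_inv ^ n)"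

end

theory Submission
  imports Defs
begin

definition xp :: "int \<Rightarrow> 'a::comm_ring_1 fls" where "xp i = fls_shift (-i) 1"

lemma xp_nth: "fls_nth (xp i) k = (if k = i then 1 else 0)"
  by (simp add: xp_def)
lemma xp_mult: "xp i * xp j = xp (i + j)"
  unfolding xp_def by (rule fls_X_intpow_times_fls_X_intpow)
lemma xp_0[simp]: "xp 0 = 1" by (simp add: xp_def)
lemma X_xp: "fls_X = xp 1" by (simp add: xp_def fls_X_conv_shift_1)
lemma Xinv_xp: "fls_X_inv = xp (-1)" by (simp add: xp_def fls_X_inv_conv_shift_1)
lemma Xpow_xp: "fls_X ^ n = xp (int n)" by (simp add: xp_def fls_X_power_conv_shift_1)
lemma Xinvpow_xp: "fls_X_inv ^ n = xp (- int n)" by (simp add: xp_def fls_X_inv_power_conv_shift_1)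
lemma X_Xinv: "fls_X * fls_X_inv = (1::'a::comm_ring_1 fls)"
  by (simp add: X_xp Xinv_xp xp_mult)

lemma L_const: "fls_const c \<in> laurent_polys"
proof -
  have "{n. fls_nth (fls_const c) n \<noteq> 0} \<subseteq> {0}" by auto
  then show ?thesis unfolding laurent_polys_def by (auto intro: finite_subset)
qed

lemma L_xp: "xp i \<in> laurent_polys"
proof -
  have "{n. fls_nth (xp i) n \<noteq> 0} \<subseteq> {i}" by (auto simp: xp_nth)
  then show ?thesis unfolding laurent_polys_def by (auto intro: finite_subset)
qed

lemma const_xp_nth: "fls_nth (fls_const c * xp i) k = (if k = i then c else 0)"
  by (simp add: xp_nth)

lemma laurent_decomp:
  assumes "f \<in> laurent_polys"
  shows "f = (\<Sum>n | fls_nth f n \<noteq> 0. fls_const (fls_nth f n) * xp n)"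
proof (rule fls_eqI)
  fix k
  have fin: "finite {n. fls_nth f n \<noteq> 0}" using assms by (simp add: laurent_polys_def)
  have e: "\<And>n. fls_nth f n * fls_nth (xp n) k = (if n = k then fls_nth f k else 0)"
    by (simp add: xp_nth)
  have "fls_nth (\<Sum>n | fls_nth f n \<noteq> 0. fls_const (fls_nth f n) * xp n) k
      = (\<Sum>n | fls_nth f n \<noteq> 0. (if n = k then fls_nth f k else 0))"
    by (simp add: fls_nth_sum e)
  also have "\<dots> = fls_nth f k"
    using fin by (simp add: sum.delta)
  finally show "fls_nth f k = fls_nth (\<Sum>n | fls_nth f n \<noteq> 0. fls_const (fls_nth f n) * xp n) k" by simp
qed

definition cf :: "'k::field_char_0 \<Rightarrow> nat \<Rightarrow> 'k" where
  "cf s n = inverse (fact n) * (- inverse s) ^ n"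


lemma diag_sum:
  fixes F :: "nat \<Rightarrow> nat \<Rightarrow> 'a::comm_monoid_add"
  assumes z: "\<And>m n. N \<le> m \<or> N \<le> n \<Longrightarrow> F m n = 0"
  shows "(\<Sum>m<N. \<Sum>n<N. F m n) = (\<Sum>k<2*N. \<Sum>m\<le>k. F m (k - m))"
proof -
  have "(\<Sum>m<N. \<Sum>n<N. F m n) = (\<Sum>(m,n)\<in>{..<N}\<times>{..<N}. F m n)"
    by (simp add: sum.cartesian_product)
  also have "\<dots> = (\<Sum>(m,n)\<in>{(i,j). i+j < 2*N}. F m n)"
  proof (rule sum.mono_neutral_left)
    have "{(i,j). i+j < 2*N} \<subseteq> {..<2*N}\<times>{..<2*N}" by auto
    then show "finite {(i,j). i+j < 2*N}" by (rule finite_subset) simp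
    show "{..<N}\<times>{..<N} \<subseteq> {(i,j). i+j < 2*N}" by auto
    show "\<forall>i\<in>{(i,j). i+j < 2*N} - {..<N}\<times>{..<N}. (case i of (m,n) \<Rightarrow> F m n) = 0"
    proof
      fix i assume "i \<in> {(i,j). i+j < 2*N} - {..<N}\<times>{..<N}"
      then obtain m n where "i = (m,n)" "\<not> (m < N \<and> n < N)" by auto
      then show "(case i of (m,n) \<Rightarrow> F m n) = 0" using z[of m n] by auto
    qed
  qed
  also have "\<dots> = (\<Sum>k<2*N. \<Sum>m\<le>k. F m (k - m))"
    by (rule sum.triangle_reindex)
  finally show ?thesis .
qed

lemma pascal_sum:
  fixes G :: "nat \<Rightarrow> nat \<Rightarrow> 'a::comm_ring_1"
  shows "(\<Sum>m\<le>k. of_nat (k choose m) * G (Suc m) (k - m)) + (\<Sum>m\<le>k. of_nat (k choose m) * G m (Suc (k - m)))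
       = (\<Sum>m\<le>Suc k. of_nat (Suc k choose m) * G m (Suc k - m))"
proof -
  define f where "f m = of_nat (k choose m) * G m (Suc k - m)" for m
  have A: "(\<Sum>m\<le>k. of_nat (k choose m) * G m (Suc (k - m))) = (\<Sum>m\<le>k. f m)"
    by (rule sum.cong) (auto simp: f_def Suc_diff_le)
  have "(\<Sum>m\<le>Suc k. f m) = f 0 + (\<Sum>m\<le>k. f (Suc m))" by (rule sum.atMost_Suc_shift)
  moreover have "(\<Sum>m\<le>Suc k. f m) = (\<Sum>m\<le>k. f m) + f (Suc k)" by simp
  moreover have "f (Suc k) = 0" by (simp add: f_def binomial_eq_0)
  ultimately have B: "(\<Sum>m\<le>k. f m) = f 0 + (\<Sum>m\<le>k. f (Suc m))" by simp
  have C: "(\<Sum>m\<le>k. f (Suc m)) = (\<Sum>m\<le>k. of_nat (k choose Suc m) * G (Suc m) (k - m))"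
  proof (rule sum.cong)
    fix m assume "m \<in> {..k}"
    then show "f (Suc m) = of_nat (k choose Suc m) * G (Suc m) (k - m)"
      by (cases "m < k") (auto simp: f_def)
  qed simp
  have "(\<Sum>m\<le>Suc k. of_nat (Suc k choose m) * G m (Suc k - m))
      = G 0 (Suc k) + (\<Sum>m\<le>k. of_nat (Suc k choose Suc m) * G (Suc m) (Suc k - Suc m))"
    by (subst sum.atMost_Suc_shift) simp
  also have "\<dots> = G 0 (Suc k) + (\<Sum>m\<le>k. of_nat (k choose m) * G (Suc m) (k - m))
      + (\<Sum>m\<le>k. of_nat (k choose Suc m) * G (Suc m) (k - m))"
    by (simp add: sum.distrib distrib_right)
  finally show ?thesis using A B C by (simp add: f_def)
qed

lemma correction_sum:
  fixes H :: "nat \<Rightarrow> nat \<Rightarrow> 'a::comm_ring_1"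
  shows "(\<Sum>m\<le>k. of_nat (k choose m) * (of_nat m * H m (Suc (k - m)) - of_nat (k - m) * H (Suc m) (k - m))) = 0"
proof -
  define f where "f m = of_nat (k choose m) * of_nat m * H m (Suc k - m)" for m
  have A: "(\<Sum>m\<le>k. of_nat (k choose m) * (of_nat m * H m (Suc (k - m)))) = (\<Sum>m\<le>k. f m)"
    by (rule sum.cong) (auto simp: f_def Suc_diff_le mult.assoc)
  have "(\<Sum>m\<le>Suc k. f m) = f 0 + (\<Sum>m\<le>k. f (Suc m))" by (rule sum.atMost_Suc_shift)
  moreover have "(\<Sum>m\<le>Suc k. f m) = (\<Sum>m\<le>k. f m) + f (Suc k)" by simp
  moreover have "f (Suc k) = 0" by (simp add: f_def binomial_eq_0)
  moreover have "f 0 = 0" by (simp add: f_def)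
  ultimately have B: "(\<Sum>m\<le>k. f m) = (\<Sum>m\<le>k. f (Suc m))" by simp
  have C: "(\<Sum>m\<le>k. f (Suc m)) = (\<Sum>m\<le>k. of_nat (k choose m) * (of_nat (k - m) * H (Suc m) (k - m)))"
  proof (rule sum.cong)
    fix m assume "m \<in> {..k}"
    have e: "(k choose Suc m) * Suc m = (k choose m) * (k - m)"
      using binomial_absorption[of m k] binomial_absorb_comp[of k m] by (simp add: mult.commute)
    have "f (Suc m) = of_nat ((k choose Suc m) * Suc m) * H (Suc m) (k - m)"
      unfolding f_def of_nat_mult by simp
    also have "\<dots> = of_nat ((k choose m) * (k - m)) * H (Suc m) (k - m)" by (simp only: e)
    finally show "f (Suc m) = of_nat (k choose m) * (of_nat (k - m) * H (Suc m) (k - m))"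
      by (simp add: mult.assoc)
  qed simp
  show ?thesis using A B C by (simp add: right_diff_distrib sum_subtractf)
qed


lemma cf_mult:
  assumes "m \<le> k"
  shows "cf s m * cf s' (k - m) = inverse (fact k) * of_nat (k choose m) * (- inverse s) ^ m * (- inverse s') ^ (k - m)"
proof -
  have b: "(of_nat (k choose m) :: 'a) = fact k / (fact m * fact (k - m))"
    by (rule binomial_fact[OF assms])
  have "inverse (fact k) * (of_nat (k choose m) :: 'a) = inverse (fact m) * inverse (fact (k - m))"
    unfolding b by (simp add: field_simps)
  then show ?thesis unfolding cf_def by (simp add: mult_ac)
qed

lemma cf_mult_same:
  assumes "m \<le> k"
  shows "cf s m * cf s (k - m) = cf s k * of_nat (k choose m)"
proof -
  have "(- inverse s) ^ m * (- inverse s) ^ (k - m) = (- inverse s) ^ k"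
    using assms by (simp flip: power_add)
  then show ?thesis using cf_mult[OF assms, of s s] unfolding cf_def by (simp add: mult_ac)
qed

lemma cf_0[simp]: "cf s 0 = 1" by (simp add: cf_def)

lemma const_sum: "fls_const (\<Sum>x\<in>A. f x) = (\<Sum>x\<in>A. fls_const (f x))"
  by (induction A rule: infinite_finite_induct) (simp_all add: fls_plus_const[symmetric])

lemma dsum_gen:
  fixes g w :: "nat \<Rightarrow> nat \<Rightarrow> 'a::comm_ring_1"
  assumes z: "\<And>m n. N \<le> m \<or> N \<le> n \<Longrightarrow> g m n = 0"
  shows "(\<Sum>m<N. \<Sum>n<N. fls_const (w m n * g m n) * fls_X_inv ^ (m + n))
       = (\<Sum>k<2*N. fls_const (\<Sum>m\<le>k. w m (k - m) * g m (k - m)) * fls_X_inv ^ k)"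
proof -
  have "(\<Sum>m<N. \<Sum>n<N. fls_const (w m n * g m n) * fls_X_inv ^ (m + n))
     = (\<Sum>k<2*N. \<Sum>m\<le>k. fls_const (w m (k - m) * g m (k - m)) * fls_X_inv ^ (m + (k - m)))"
    by (rule diag_sum) (use z in auto)
  also have "\<dots> = (\<Sum>k<2*N. \<Sum>m\<le>k. fls_const (w m (k - m) * g m (k - m)) * fls_X_inv ^ k)"
    by (intro sum.cong refl) auto
  also have "\<dots> = (\<Sum>k<2*N. fls_const (\<Sum>m\<le>k. w m (k - m) * g m (k - m)) * fls_X_inv ^ k)"
    by (simp add: const_sum sum_distrib_right)
  finally show ?thesis .
qed


definition Th :: "('k::field_char_0 \<Rightarrow> 'b::comm_ring_1) \<Rightarrow> ('b \<Rightarrow> 'b) \<Rightarrow> 'k \<Rightarrow> 'b fls \<Rightarrow> 'b fls" where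
  "Th \<iota> \<delta> s f = (\<Sum>n | fls_nth f n \<noteq> 0. theta_map \<iota> \<delta> s (fls_nth f n) * xp n)"

locale thl =
  fixes \<iota> :: "'k::field_char_0 \<Rightarrow> 'b::comm_ring_1" and \<delta> :: "'b \<Rightarrow> 'b"
  assumes hom: "k_algebra_hom \<iota>" and delta: "derivation \<iota> \<delta>" and nil: "locally_nilpotent \<delta>"
    and SL: "subring_on (laurent_polys :: 'b fls set)"
begin

lemma L0: "(0::'b fls) \<in> laurent_polys" and L1: "(1::'b fls) \<in> laurent_polys"
  and Ladd: "f \<in> laurent_polys \<Longrightarrow> g \<in> laurent_polys \<Longrightarrow> (f + g :: 'b fls) \<in> laurent_polys"
  and Lmul: "f \<in> laurent_polys \<Longrightarrow> g \<in> laurent_polys \<Longrightarrow> (f * g :: 'b fls) \<in> laurent_polys"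
  and Lneg: "f \<in> laurent_polys \<Longrightarrow> (- f :: 'b fls) \<in> laurent_polys"
  using SL unfolding subring_on_def by auto

lemma Lsub: assumes "f \<in> laurent_polys" "g \<in> laurent_polys" shows "(f - g :: 'b fls) \<in> laurent_polys"
proof -
  have "f + - g \<in> laurent_polys" by (rule Ladd[OF assms(1) Lneg[OF assms(2)]])
  then show ?thesis by (simp only: diff_conv_add_uminus)
qed

lemma Lpow: "f \<in> laurent_polys \<Longrightarrow> (f ^ n :: 'b fls) \<in> laurent_polys"
  by (induction n) (auto intro: Lmul L1)

lemma Lmono: "fls_const (c::'b) * xp i \<in> laurent_polys"
  by (rule Lmul[OF L_const L_xp])

lemma LX: "(fls_X :: 'b fls) \<in> laurent_polys" and LY: "(fls_X_inv :: 'b fls) \<in> laurent_polys"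
  by (simp_all add: X_xp Xinv_xp L_xp)

lemma L_sum:
  assumes "\<And>x. x \<in> A \<Longrightarrow> g x \<in> (laurent_polys :: 'b fls set)"
  shows "(\<Sum>x\<in>A. g x) \<in> laurent_polys"
  using assms
proof (induction A rule: infinite_finite_induct)
qed (auto intro: L0 Ladd)

lemma laurent_induct[consumes 1, case_names mono add]:
  assumes "(f::'b fls) \<in> laurent_polys"
    and mono: "\<And>c i. P (fls_const c * xp i)"
    and add: "\<And>f g. f \<in> laurent_polys \<Longrightarrow> g \<in> laurent_polys \<Longrightarrow> P f \<Longrightarrow> P g \<Longrightarrow> P (f + g)"
  shows "P f"
proof -
  have fin: "finite {n. fls_nth f n \<noteq> 0}" using assms(1) by (simp add: laurent_polys_def)
  have "\<And>S. finite S \<Longrightarrow> P (\<Sum>n\<in>S. fls_const (fls_nth f n) * xp n)"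
  proof -
    fix S :: "int set" assume "finite S"
    then show "P (\<Sum>n\<in>S. fls_const (fls_nth f n) * xp n)"
    proof (induction S rule: finite_induct)
      case empty
      have "P (fls_const 0 * xp 0)" by (rule mono)
      then show ?case by simp
    next
      case (insert x F)
      have "P (fls_const (fls_nth f x) * xp x + (\<Sum>n\<in>F. fls_const (fls_nth f n) * xp n))"
        by (rule add[OF Lmono L_sum[OF Lmono] mono insert.IH])
      then show ?case using insert by simp
    qed
  qed
  from this[OF fin] show ?thesis using laurent_decomp[OF assms(1)] by simp
qed


lemma i1: "\<iota> 1 = 1" and iadd: "\<iota> (c + d) = \<iota> c + \<iota> d" and imul: "\<iota> (c * d) = \<iota> c * \<iota> d"
  using hom unfolding k_algebra_hom_def by auto

lemma i0: "\<iota> 0 = 0"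
proof -
  have "\<iota> 0 = \<iota> (0 + 0)" by simp
  also have "\<dots> = \<iota> 0 + \<iota> 0" by (rule iadd)
  finally show ?thesis by (rule add_cancel_right_right[THEN iffD1])
qed

lemma ineg: "\<iota> (- c) = - \<iota> c"
  proof -
  have "\<iota> c + \<iota> (- c) = \<iota> (c + - c)" by (rule iadd[symmetric])
  also have "\<dots> = 0" by (simp add: i0)
  finally show ?thesis by (rule minus_unique[symmetric])
qed

lemma isub: "\<iota> (c - d) = \<iota> c - \<iota> d"
  using iadd[of c "-d"] ineg by simp

lemma iofnat: "\<iota> (of_nat n) = of_nat n"
  by (induction n) (simp_all add: i0 i1 iadd)

lemma ipow: "\<iota> (c ^ n) = \<iota> c ^ n"
  by (induction n) (simp_all add: i1 imul)

lemma isum: "\<iota> (\<Sum>x\<in>A. f x) = (\<Sum>x\<in>A. \<iota> (f x))"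
  by (induction A rule: infinite_finite_induct) (simp_all add: i0 iadd)

lemma dadd: "\<delta> (a + b) = \<delta> a + \<delta> b" and dscal: "\<delta> (\<iota> c * a) = \<iota> c * \<delta> a"
  and dmul: "\<delta> (a * b) = \<delta> a * b + a * \<delta> b"
  using delta unfolding derivation_def by auto

lemma d0: "\<delta> 0 = 0"
proof -
  have "\<delta> 0 = \<delta> (0 + 0)" by simp
  also have "\<dots> = \<delta> 0 + \<delta> 0" by (rule dadd)
  finally show ?thesis by (rule add_cancel_right_right[THEN iffD1])
qed
lemma dneg: "\<delta> (- a) = - \<delta> a" proof -
  have "\<delta> a + \<delta> (- a) = \<delta> (a + - a)" by (rule dadd[symmetric])
  also have "\<dots> = 0" by (simp add: d0)
  finally show ?thesis by (rule minus_unique[symmetric])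
qed
lemma dsub: "\<delta> (a - b) = \<delta> a - \<delta> b" using dadd[of a "-b"] dneg by simp
lemma d1: "\<delta> 1 = 0"
proof -
  have "\<delta> 1 = \<delta> (1 * 1)" by simp
  also have "\<dots> = \<delta> 1 * 1 + 1 * \<delta> 1" by (rule dmul)
  also have "\<dots> = \<delta> 1 + \<delta> 1" by simp
  finally show ?thesis by (rule add_cancel_right_right[THEN iffD1])
qed
lemma dconst: "\<delta> (\<iota> c) = 0" using dscal[of c 1] d1 by simp
lemma dofnat: "\<delta> (of_nat n * a) = of_nat n * \<delta> a" using dscal[of "of_nat n" a] by (simp add: iofnat)
lemma dnat: "\<delta> (of_nat n) = 0" using dconst[of "of_nat n"] by (simp add: iofnat)
lemma dsum: "\<delta> (\<Sum>x\<in>A. f x) = (\<Sum>x\<in>A. \<delta> (f x))"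
  by (induction A rule: infinite_finite_induct) (simp_all add: d0 dadd)

lemma Dn0: "(\<delta> ^^ n) 0 = 0" by (induction n) (simp_all add: d0)
lemma Dnadd: "(\<delta> ^^ n) (a + b) = (\<delta> ^^ n) a + (\<delta> ^^ n) b" by (induction n) (simp_all add: dadd)
lemma Dnscal: "(\<delta> ^^ n) (\<iota> c * a) = \<iota> c * (\<delta> ^^ n) a" by (induction n) (simp_all add: dscal)
lemma Dnneg: "(\<delta> ^^ n) (- a) = - (\<delta> ^^ n) a" by (induction n) (simp_all add: dneg)
lemma Dnsub: "(\<delta> ^^ n) (a - b) = (\<delta> ^^ n) a - (\<delta> ^^ n) b" by (induction n) (simp_all add: dsub)
lemma Dnofnat: "(\<delta> ^^ n) (of_nat m * a) = of_nat m * (\<delta> ^^ n) a" by (induction n) (simp_all add: dofnat)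
lemma Dnsum: "(\<delta> ^^ n) (\<Sum>x\<in>A. f x) = (\<Sum>x\<in>A. (\<delta> ^^ n) (f x))"
  by (induction A rule: infinite_finite_induct) (simp_all add: Dn0 Dnadd)
lemma Dnconst: "(\<delta> ^^ Suc n) (\<iota> c) = 0"
  by (induction n) (simp_all add: dconst d0)

lemma Dn_ge: assumes "(\<delta> ^^ N) b = 0" "N \<le> m" shows "(\<delta> ^^ m) b = 0"
proof -
  obtain j where "m = N + j" using assms(2) le_Suc_ex by blast
  then have "m = j + N" by simp
  then show ?thesis using assms(1) by (simp add: funpow_add Dn0)
qed

lemma nilN: "\<exists>N. (\<delta> ^^ N) b = 0" using nil unfolding locally_nilpotent_def by auto

lemma theta_trunc:
  assumes "(\<delta> ^^ N) b = 0"
  shows "theta_map \<iota> \<delta> s b = (\<Sum>n<N. fls_const (\<iota> (cf s n) * (\<delta> ^^ n) b) * fls_X_inv ^ n)"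
proof -
  have sub: "{n. (\<delta> ^^ n) b \<noteq> 0} \<subseteq> {..<N}"
  proof
    fix n assume "n \<in> {n. (\<delta> ^^ n) b \<noteq> 0}"
    then show "n \<in> {..<N}" using Dn_ge[OF assms, of n] by (cases "N \<le> n") auto
  qed
  show ?thesis unfolding theta_map_def cf_def
  proof (rule sum.mono_neutral_left)
    show "finite {..<N}" by simp
    show "{n. (\<delta> ^^ n) b \<noteq> 0} \<subseteq> {..<N}" by (rule sub)
    show "\<forall>i\<in>{..<N} - {n. (\<delta> ^^ n) b \<noteq> 0}.
       fls_const (\<iota> (inverse (fact i) * (- inverse s) ^ i) * (\<delta> ^^ i) b) * fls_X_inv ^ i = 0"
      by simp
  qed
qed


lemma pascal:
  assumes step: "\<And>m n. \<delta> (G m n) = G (Suc m) n + G m (Suc n) + E m n"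
    and corr: "\<And>k. (\<Sum>m\<le>k. of_nat (k choose m) * E m (k - m)) = 0"
  shows "(\<delta> ^^ k) (G 0 0) = (\<Sum>m\<le>k. of_nat (k choose m) * G m (k - m))"
proof (induction k)
  case 0 then show ?case by simp
next
  case (Suc k)
  have "(\<delta> ^^ Suc k) (G 0 0) = \<delta> (\<Sum>m\<le>k. of_nat (k choose m) * G m (k - m))"
    using Suc by simp
  also have "\<dots> = (\<Sum>m\<le>k. of_nat (k choose m) * \<delta> (G m (k - m)))"
    by (simp add: dsum dofnat)
  also have "\<dots> = (\<Sum>m\<le>k. of_nat (k choose m) * G (Suc m) (k - m))
     + (\<Sum>m\<le>k. of_nat (k choose m) * G m (Suc (k - m))) + (\<Sum>m\<le>k. of_nat (k choose m) * E m (k - m))"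
    by (simp add: step distrib_left sum.distrib)
  also have "\<dots> = (\<Sum>m\<le>Suc k. of_nat (Suc k choose m) * G m (Suc k - m))"
    by (simp add: corr pascal_sum)
  finally show ?case .
qed

lemma leibniz: "(\<delta> ^^ k) (a * b) = (\<Sum>m\<le>k. of_nat (k choose m) * ((\<delta> ^^ m) a * (\<delta> ^^ (k - m)) b))"
  using pascal[where G="\<lambda>m n. (\<delta> ^^ m) a * (\<delta> ^^ n) b" and E="\<lambda>_ _. 0"]
  by (simp add: dmul)


lemma coef_mult: "m \<le> k \<Longrightarrow> \<iota> (cf s m * cf s (k - m)) = \<iota> (cf s k) * of_nat (k choose m)"
  by (simp add: cf_mult_same imul iofnat)

abbreviation th where "th s \<equiv> theta_map \<iota> \<delta> s"

lemma theta_mult: "th s (a * b) = th s a * th s b"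
proof -
  obtain Na where Na: "(\<delta> ^^ Na) a = 0" using nilN by blast
  obtain Nb where Nb: "(\<delta> ^^ Nb) b = 0" using nilN by blast
  define N where "N = Na + Nb"
  have zA: "\<And>m. N \<le> m \<Longrightarrow> (\<delta> ^^ m) a = 0" using Dn_ge[OF Na] by (simp add: N_def)
  have zB: "\<And>m. N \<le> m \<Longrightarrow> (\<delta> ^^ m) b = 0" using Dn_ge[OF Nb] by (simp add: N_def)
  have lb: "\<And>k. (\<delta> ^^ k) (a * b) = (\<Sum>m\<le>k. of_nat (k choose m) * ((\<delta> ^^ m) a * (\<delta> ^^ (k - m)) b))"
    by (rule leibniz)
  have z2: "(\<delta> ^^ (2*N)) (a * b) = 0"
    unfolding lb
  proof (rule sum.neutral, intro ballI)
    fix x assume "x \<in> {..2*N}"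
    show "of_nat (2 * N choose x) * ((\<delta> ^^ x) a * (\<delta> ^^ (2 * N - x)) b) = 0"
    proof (cases "N \<le> x")
      case True then show ?thesis by (simp add: zA)
    next
      case False then have "N \<le> 2 * N - x" by simp
      then show ?thesis by (simp add: zB)
    qed
  qed
  have "th s a * th s b = (\<Sum>m<N. fls_const (\<iota> (cf s m) * (\<delta> ^^ m) a) * fls_X_inv ^ m)
       * (\<Sum>n<N. fls_const (\<iota> (cf s n) * (\<delta> ^^ n) b) * fls_X_inv ^ n)"
    using theta_trunc[OF zA[OF order_refl]] theta_trunc[OF zB[OF order_refl]] by simp
  also have "\<dots> = (\<Sum>m<N. \<Sum>n<N. fls_const (\<iota> (cf s m * cf s n) * ((\<delta> ^^ m) a * (\<delta> ^^ n) b)) * fls_X_inv ^ (m + n))"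
    unfolding sum_product by (intro sum.cong refl) (simp add: imul power_add mult_ac)
  also have "\<dots> = (\<Sum>k<2*N. fls_const (\<Sum>m\<le>k. \<iota> (cf s m * cf s (k - m)) * ((\<delta> ^^ m) a * (\<delta> ^^ (k - m)) b)) * fls_X_inv ^ k)"
    by (rule dsum_gen) (auto simp: zA zB)
  also have "\<dots> = (\<Sum>k<2*N. fls_const (\<iota> (cf s k) * (\<delta> ^^ k) (a * b)) * fls_X_inv ^ k)"
  proof (intro sum.cong refl arg_cong2[where f="(*)"] arg_cong[where f=fls_const])
    fix k
    have "(\<Sum>m\<le>k. \<iota> (cf s m * cf s (k - m)) * ((\<delta> ^^ m) a * (\<delta> ^^ (k - m)) b))
        = (\<Sum>m\<le>k. \<iota> (cf s k) * (of_nat (k choose m) * ((\<delta> ^^ m) a * (\<delta> ^^ (k - m)) b)))"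
      by (intro sum.cong refl) (simp add: coef_mult mult.assoc)
    also have "\<dots> = \<iota> (cf s k) * (\<delta> ^^ k) (a * b)"
      by (simp add: lb sum_distrib_left)
    finally show "(\<Sum>m\<le>k. \<iota> (cf s m * cf s (k - m)) * ((\<delta> ^^ m) a * (\<delta> ^^ (k - m)) b))
        = \<iota> (cf s k) * (\<delta> ^^ k) (a * b)" .
  qed
  also have "\<dots> = th s (a * b)"
    using theta_trunc[OF z2] by simp
  finally show ?thesis by simp
qed

lemma theta_add: "th s (a + b) = th s a + th s b"
proof -
  obtain Na where Na: "(\<delta> ^^ Na) a = 0" using nilN by blast
  obtain Nb where Nb: "(\<delta> ^^ Nb) b = 0" using nilN by blast
  define N where "N = Na + Nb"
  have zA: "(\<delta> ^^ N) a = 0" using Dn_ge[OF Na] by (simp add: N_def)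
  have zB: "(\<delta> ^^ N) b = 0" using Dn_ge[OF Nb] by (simp add: N_def)
  have zAB: "(\<delta> ^^ N) (a + b) = 0" using zA zB by (simp add: Dnadd)
  show ?thesis
    unfolding theta_trunc[OF zA] theta_trunc[OF zB] theta_trunc[OF zAB]
    by (simp add: Dnadd distrib_left distrib_right sum.distrib fls_plus_const[symmetric])
qed

lemma theta_0: "th s 0 = 0"
  using theta_add[of s 0 0] by simp

lemma theta_iota: "th s (\<iota> c) = fls_const (\<iota> c)"
proof -
  have "(\<delta> ^^ 1) (\<iota> c) = 0" using Dnconst[of 0 c] by simp
  from theta_trunc[OF this] show ?thesis by (simp add: i1)
qed

lemma theta_1: "th s 1 = 1"
  using theta_iota[of s 1] by (simp add: i1)

lemma theta_scal: "th s (\<iota> c * a) = fls_const (\<iota> c) * th s a"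
  by (simp add: theta_mult theta_iota)

lemma theta_L: "th s b \<in> laurent_polys"
proof -
  obtain N where N: "(\<delta> ^^ N) b = 0" using nilN by blast
  show ?thesis unfolding theta_trunc[OF N]
    by (intro L_sum Lmul L_const Lpow LY)
qed

abbreviation T where "T s \<equiv> Th \<iota> \<delta> s"

lemma Th_sup:
  assumes "finite F" "{n. fls_nth f n \<noteq> 0} \<subseteq> F"
  shows "T s f = (\<Sum>n\<in>F. th s (fls_nth f n) * xp n)"
  unfolding Th_def
proof (rule sum.mono_neutral_left[OF assms])
  show "\<forall>i\<in>F - {n. fls_nth f n \<noteq> 0}. th s (fls_nth f i) * xp i = 0"
    by (simp add: theta_0)
qed

lemma Th_L: "T s f \<in> laurent_polys"
  unfolding Th_def by (intro L_sum Lmul theta_L L_xp)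

lemma Th_add:
  assumes "f \<in> laurent_polys" "g \<in> laurent_polys"
  shows "T s (f + g) = T s f + T s g"
proof -
  define F where "F = {n. fls_nth f n \<noteq> 0} \<union> {n. fls_nth g n \<noteq> 0}"
  have fin: "finite F" using assms by (simp add: F_def laurent_polys_def)
  have "T s (f + g) = (\<Sum>n\<in>F. th s (fls_nth (f + g) n) * xp n)"
    by (rule Th_sup[OF fin]) (auto simp: F_def)
  also have "\<dots> = (\<Sum>n\<in>F. th s (fls_nth f n) * xp n) + (\<Sum>n\<in>F. th s (fls_nth g n) * xp n)"
    by (simp add: theta_add distrib_right sum.distrib)
  also have "\<dots> = T s f + T s g"
    by (simp add: Th_sup[OF fin, of f] Th_sup[OF fin, of g] F_def)
  finally show ?thesis .
qed

lemma Th_mono: "T s (fls_const c * xp i) = th s c * xp i"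
proof -
  have "T s (fls_const c * xp i) = (\<Sum>n\<in>{i}. th s (fls_nth (fls_const c * xp i) n) * xp n)"
    by (rule Th_sup) (auto simp: xp_nth split: if_splits)
  then show ?thesis by (simp add: xp_nth)
qed

lemma Th_0: "T s 0 = 0" by (simp add: Th_def)

lemma Th_const: "T s (fls_const b) = th s b"
  using Th_mono[of s b 0] by simp

lemma Th_xp: "T s (xp i) = xp i"
  using Th_mono[of s 1 i] by (simp add: theta_1)

lemma Th_X: "T s fls_X = fls_X" and Th_Y: "T s fls_X_inv = fls_X_inv"
  by (simp_all add: X_xp Xinv_xp Th_xp)

lemma Th_mult:
  assumes "f \<in> laurent_polys" "g \<in> laurent_polys"
  shows "T s (f * g) = T s f * T s g"
proof -
  have "\<forall>g\<in>laurent_polys. T s (f * g) = T s f * T s g"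
    using assms(1)
  proof (induction f rule: laurent_induct)
    case (mono c i)
    show ?case
    proof
      fix g :: "'b fls" assume "g \<in> laurent_polys"
      then show "T s (fls_const c * xp i * g) = T s (fls_const c * xp i) * T s g"
      proof (induction g rule: laurent_induct)
        case (mono d j)
        have "fls_const c * xp i * (fls_const d * xp j) = (fls_const c * fls_const d) * (xp i * xp j)"
          by (simp only: mult_ac)
        also have "\<dots> = fls_const (c * d) * xp (i + j)" by (simp only: fls_const_mult_const xp_mult)
        finally have e: "fls_const c * xp i * (fls_const d * xp j) = fls_const (c * d) * xp (i + j)" .
        show ?case unfolding e Th_mono by (simp add: theta_mult xp_mult[symmetric] mult_ac)
      next
        case (add g1 g2)
        then show ?case by (simp add: distrib_left Th_add Lmul Lmono)
      qed
    qed
  next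
    case (add f1 f2)
    then show ?case by (simp add: distrib_right Th_add Lmul)
  qed
  then show ?thesis using assms(2) by blast
qed

lemma Th_1: "T s 1 = 1"
  using Th_xp[of s 0] by simp

lemma Th_neg: assumes "f \<in> laurent_polys" shows "T s (- f) = - T s f"
proof -
  have "T s (f + - f) = T s f + T s (- f)" by (rule Th_add[OF assms Lneg[OF assms]])
  then have h: "T s f + T s (- f) = 0" by (simp add: Th_0)
  show ?thesis using minus_unique[OF h] by simp
qed

lemma Th_sub: assumes "f \<in> laurent_polys" "g \<in> laurent_polys" shows "T s (f - g) = T s f - T s g"
  using Th_add[OF assms(1) Lneg[OF assms(2)]] Th_neg[OF assms(2)] by simp

lemma Th_sum: assumes "\<And>x. x \<in> A \<Longrightarrow> g x \<in> laurent_polys"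
  shows "T s (\<Sum>x\<in>A. g x) = (\<Sum>x\<in>A. T s (g x))"
  using assms
proof (induction A rule: infinite_finite_induct)
  case (insert x F)
  then show ?case by (simp add: Th_add L_sum)
qed (simp_all add: Th_0)

lemma Th_pow: assumes "f \<in> laurent_polys" shows "T s (f ^ n) = T s f ^ n"
  by (induction n) (simp_all add: Th_1 Th_mult assms Lpow)

lemma Th_scal: assumes "f \<in> laurent_polys" shows "T s (fls_const (\<iota> c) * f) = fls_const (\<iota> c) * T s f"
  by (simp add: Th_mult assms L_const Th_const theta_iota)

lemma cf_inv_sum: "(\<Sum>m\<le>k. cf (- s) m * cf s (k - m)) = inverse (fact k) * 0 ^ k"
proof -
  have "(\<Sum>m\<le>k. cf (- s) m * cf s (k - m))
      = (\<Sum>m\<le>k. inverse (fact k) * (of_nat (k choose m) * (inverse s) ^ m * (- inverse s) ^ (k - m)))"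
    by (intro sum.cong refl) (simp add: cf_mult mult_ac)
  also have "\<dots> = inverse (fact k) * (\<Sum>m\<le>k. of_nat (k choose m) * (inverse s) ^ m * (- inverse s) ^ (k - m))"
    by (rule sum_distrib_left[symmetric])
  also have "\<dots> = inverse (fact k) * (inverse s + - inverse s) ^ k"
    by (simp only: binomial_ring)
  finally show ?thesis by simp
qed

lemma theta_inv: "T (- s) (th s c) = fls_const c"
proof -
  obtain N0 where N0: "(\<delta> ^^ N0) c = 0" using nilN by blast
  define N where "N = Suc N0"
  have zN: "\<And>m. N \<le> m \<Longrightarrow> (\<delta> ^^ m) c = 0" using Dn_ge[OF N0] by (simp add: N_def)
  have zn: "\<And>n. (\<delta> ^^ N) ((\<delta> ^^ n) c) = 0"
  proof -
    fix n
    have "(\<delta> ^^ N) ((\<delta> ^^ n) c) = (\<delta> ^^ (N + n)) c" by (simp add: funpow_add)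
    then show "(\<delta> ^^ N) ((\<delta> ^^ n) c) = 0" using zN[of "N + n"] by simp
  qed
  have "T (- s) (th s c) = T (- s) (\<Sum>n<N. fls_const (\<iota> (cf s n) * (\<delta> ^^ n) c) * fls_X_inv ^ n)"
    using theta_trunc[OF zN[OF order_refl]] by simp
  also have "\<dots> = (\<Sum>n<N. th (- s) (\<iota> (cf s n) * (\<delta> ^^ n) c) * fls_X_inv ^ n)"
    by (simp add: Th_sum Lmul L_const Lpow LY Th_mult Th_pow Th_Y Th_const)
  also have "\<dots> = (\<Sum>n<N. \<Sum>m<N. fls_const (\<iota> (cf (- s) m * cf s n) * (\<delta> ^^ (m + n)) c) * fls_X_inv ^ (m + n))"
  proof (intro sum.cong refl)
    fix n
    have "th (- s) (\<iota> (cf s n) * (\<delta> ^^ n) c) * fls_X_inv ^ n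
        = fls_const (\<iota> (cf s n)) * (\<Sum>m<N. fls_const (\<iota> (cf (- s) m) * (\<delta> ^^ m) ((\<delta> ^^ n) c)) * fls_X_inv ^ m) * fls_X_inv ^ n"
      by (simp add: theta_scal theta_trunc[OF zn])
    also have "\<dots> = (\<Sum>m<N. fls_const (\<iota> (cf (- s) m * cf s n) * (\<delta> ^^ (m + n)) c) * fls_X_inv ^ (m + n))"
      by (simp add: sum_distrib_left sum_distrib_right funpow_add imul power_add mult_ac)
    finally show "th (- s) (\<iota> (cf s n) * (\<delta> ^^ n) c) * fls_X_inv ^ n
        = (\<Sum>m<N. fls_const (\<iota> (cf (- s) m * cf s n) * (\<delta> ^^ (m + n)) c) * fls_X_inv ^ (m + n))" .
  qed
  also have "\<dots> = (\<Sum>m<N. \<Sum>n<N. fls_const (\<iota> (cf (- s) m * cf s n) * (\<delta> ^^ (m + n)) c) * fls_X_inv ^ (m + n))"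
    by (rule sum.swap)
  also have "\<dots> = (\<Sum>k<2*N. fls_const (\<Sum>m\<le>k. \<iota> (cf (- s) m * cf s (k - m)) * (\<delta> ^^ (m + (k - m))) c) * fls_X_inv ^ k)"
    by (rule dsum_gen) (auto intro: zN)
  also have "\<dots> = (\<Sum>k<2*N. (if k = 0 then fls_const c else 0))"
  proof (intro sum.cong refl)
    fix k
    have "(\<Sum>m\<le>k. \<iota> (cf (- s) m * cf s (k - m)) * (\<delta> ^^ (m + (k - m))) c)
        = (\<Sum>m\<le>k. \<iota> (cf (- s) m * cf s (k - m)) * (\<delta> ^^ k) c)"
      by (intro sum.cong refl) auto
    also have "\<dots> = \<iota> (inverse (fact k) * 0 ^ k) * (\<delta> ^^ k) c"
      by (simp add: sum_distrib_right[symmetric] isum[symmetric] cf_inv_sum)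
    finally show "fls_const (\<Sum>m\<le>k. \<iota> (cf (- s) m * cf s (k - m)) * (\<delta> ^^ (m + (k - m))) c) * fls_X_inv ^ k
        = (if k = 0 then fls_const c else 0)"
      by (cases k) (simp_all add: i1 i0)
  qed
  also have "\<dots> = fls_const c" by (simp add: sum.delta N_def)
  finally show ?thesis .
qed

lemma Th_inv: assumes "f \<in> laurent_polys" shows "T (- s) (T s f) = f"
  using assms
proof (induction f rule: laurent_induct)
  case (mono c i)
  then show ?case by (simp add: Th_mono Th_mult theta_L L_xp theta_inv Th_xp)
next
  case (add f g)
  then show ?case by (simp add: Th_add Th_L)
qed

lemma Th_inv': assumes "f \<in> laurent_polys" shows "T s (T (- s) f) = f"
  using Th_inv[OF assms, of "- s"] by simp

lemma xp_cases: "xp i = (fls_X :: 'b fls) ^ nat i \<or> xp i = (fls_X_inv :: 'b fls) ^ nat (- i)"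
proof (cases "0 \<le> i")
  case True
  then have "(fls_X :: 'b fls) ^ nat i = xp i" by (simp add: Xpow_xp)
  then show ?thesis by simp
next
  case False
  then have "(fls_X_inv :: 'b fls) ^ nat (- i) = xp i" by (simp add: Xinvpow_xp)
  then show ?thesis by simp
qed

definition der_on :: "('b fls \<Rightarrow> 'b fls) \<Rightarrow> bool" where
  "der_on D \<longleftrightarrow> (\<forall>f\<in>laurent_polys. \<forall>g\<in>laurent_polys. D (f + g) = D f + D g \<and> D (f * g) = D f * g + f * D g)"

lemma der_one: assumes "der_on D" shows "D 1 = 0"
proof -
  have "D 1 = D (1 * 1)" by simp
  also have "\<dots> = D 1 * 1 + 1 * D 1" using assms L1 unfolding der_on_def by blast
  also have "\<dots> = D 1 + D 1" by simp
  finally show ?thesis by (rule add_cancel_right_right[THEN iffD1])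
qed

lemma der_Y: assumes "der_on D" shows "D fls_X_inv = - (fls_X_inv * fls_X_inv) * D fls_X"
proof -
  have "D (fls_X * fls_X_inv) = 0" using der_one[OF assms] by (simp add: X_Xinv)
  moreover have "D (fls_X * fls_X_inv) = D fls_X * fls_X_inv + fls_X * D fls_X_inv"
    using assms LX LY unfolding der_on_def by blast
  ultimately have "fls_X_inv * (D fls_X * fls_X_inv + fls_X * D fls_X_inv) = 0" by simp
  then have "fls_X_inv * fls_X_inv * D fls_X + (fls_X * fls_X_inv) * D fls_X_inv = 0"
    by (simp add: algebra_simps)
  then have h2: "fls_X_inv * fls_X_inv * D fls_X + D fls_X_inv = 0" by (simp only: X_Xinv mult_1_left)
  from minus_unique[OF h2] show ?thesis by simp
qed

lemma der_unique:
  assumes d1: "der_on D1" and d2: "der_on D2"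
    and c: "\<And>b. D1 (fls_const b) = D2 (fls_const b)" and x: "D1 fls_X = D2 fls_X"
    and f: "f \<in> laurent_polys"
  shows "D1 f = D2 f"
  using f
proof (induction f rule: laurent_induct)
  case (mono c0 i)
  have m1: "D1 (f * g) = D1 f * g + f * D1 g" "D2 (f * g) = D2 f * g + f * D2 g"
    if "f \<in> laurent_polys" "g \<in> laurent_polys" for f g
    using d1 d2 that unfolding der_on_def by blast+
  have y: "D1 fls_X_inv = D2 fls_X_inv" using der_Y[OF d1] der_Y[OF d2] x by simp
  have px: "D1 (fls_X ^ n) = D2 (fls_X ^ n)" for n
    by (induction n) (simp_all add: der_one[OF d1] der_one[OF d2] m1 LX Lpow x)
  have py: "D1 (fls_X_inv ^ n) = D2 (fls_X_inv ^ n)" for n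
    by (induction n) (simp_all add: der_one[OF d1] der_one[OF d2] m1 LY Lpow y)
  have pxp: "D1 (xp i) = D2 (xp i)"
    using xp_cases[of i] px py by auto
  show ?case using m1[OF L_const L_xp] c pxp by simp
next
  case (add f g)
  then show ?case using d1 d2 unfolding der_on_def by simp
qed

lemma hom_unique:
  assumes H: "\<forall>f\<in>laurent_polys. \<forall>g\<in>laurent_polys. \<Theta> (f + g) = \<Theta> f + \<Theta> g \<and> \<Theta> (f * g) = \<Theta> f * \<Theta> g"
    and one: "\<Theta> 1 = 1" and c: "\<And>b. \<Theta> (fls_const b) = th s b" and x: "\<Theta> fls_X = fls_X"
    and f: "f \<in> laurent_polys"
  shows "\<Theta> f = T s f"
  using f
proof (induction f rule: laurent_induct)
  case (mono c0 i)
  have m: "\<Theta> (f * g) = \<Theta> f * \<Theta> g" if "f \<in> laurent_polys" "g \<in> laurent_polys" for f g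
    using H that by blast
  have "\<Theta> fls_X * \<Theta> fls_X_inv = 1" using m[OF LX LY] one by (simp add: X_Xinv)
  then have "fls_X_inv * (fls_X * \<Theta> fls_X_inv) = fls_X_inv" using x by simp
  then have y: "\<Theta> fls_X_inv = fls_X_inv" by (simp add: mult.assoc[symmetric] X_Xinv mult.commute[of fls_X_inv])
  have px: "\<Theta> (fls_X ^ n) = fls_X ^ n" for n
    by (induction n) (simp_all add: one m LX Lpow x)
  have py: "\<Theta> (fls_X_inv ^ n) = fls_X_inv ^ n" for n
    by (induction n) (simp_all add: one m LY Lpow y)
  have pxp: "\<Theta> (xp i) = xp i"
    using xp_cases[of i] px py by auto
  show ?case using m[OF L_const L_xp] c pxp by (simp add: Th_mono)
next
  case (add f g)
  then show ?case using H by (simp add: Th_add)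
qed

end


locale pq = thl +
  fixes Q :: "'b fls \<Rightarrow> 'b fls \<Rightarrow> 'b fls"
  assumes PQ: "poisson_on laurent_polys (\<lambda>c. fls_const (\<iota> c)) Q"
begin

lemma Qc: "f \<in> laurent_polys \<Longrightarrow> g \<in> laurent_polys \<Longrightarrow> Q f g \<in> laurent_polys"
  and Qadd1: "f \<in> laurent_polys \<Longrightarrow> g \<in> laurent_polys \<Longrightarrow> h \<in> laurent_polys \<Longrightarrow> Q (f + g) h = Q f h + Q g h"
  and Qanti: "f \<in> laurent_polys \<Longrightarrow> g \<in> laurent_polys \<Longrightarrow> Q f g = - Q g f"
  and Qleib2: "f \<in> laurent_polys \<Longrightarrow> g \<in> laurent_polys \<Longrightarrow> h \<in> laurent_polys \<Longrightarrow> Q f (g * h) = Q f g * h + g * Q f h"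
  using PQ unfolding poisson_on_def by blast+

lemma Qadd2: "f \<in> laurent_polys \<Longrightarrow> g \<in> laurent_polys \<Longrightarrow> h \<in> laurent_polys \<Longrightarrow> Q f (g + h) = Q f g + Q f h"
  by (simp add: Qanti[of f] Qadd1 Ladd)

lemma Qleib1: "f \<in> laurent_polys \<Longrightarrow> g \<in> laurent_polys \<Longrightarrow> h \<in> laurent_polys \<Longrightarrow> Q (g * h) f = Q g f * h + g * Q h f"
  by (simp add: Qanti[of _ f] Qleib2 Lmul algebra_simps)

lemma Q0: assumes "f \<in> laurent_polys" shows "Q f 0 = 0"
proof -
  have "Q f 0 = Q f (0 + 0)" by simp
  also have "\<dots> = Q f 0 + Q f 0" by (rule Qadd2[OF assms L0 L0])
  finally show ?thesis by (rule add_cancel_right_right[THEN iffD1])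
qed

lemma Q0': assumes "f \<in> laurent_polys" shows "Q 0 f = 0"
  using Qanti[OF L0 assms] Q0[OF assms] by simp

lemma Qone: assumes "f \<in> laurent_polys" shows "Q f 1 = 0"
proof -
  have "Q f 1 = Q f (1 * 1)" by simp
  also have "\<dots> = Q f 1 * 1 + 1 * Q f 1" by (rule Qleib2[OF assms L1 L1])
  also have "\<dots> = Q f 1 + Q f 1" by simp
  finally show ?thesis by (rule add_cancel_right_right[THEN iffD1])
qed

lemma half_cancel: fixes x :: "'b fls" assumes "x + x = 0" shows "x = 0"
proof -
  have "\<iota> (inverse 2) * 2 = (1::'b)"
  proof -
    have "\<iota> (inverse 2) * 2 = \<iota> (inverse 2) * \<iota> 2" using iofnat[of 2] by simp
    also have "\<dots> = \<iota> (inverse 2 * 2)" by (rule imul[symmetric])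
    also have "\<dots> = 1" by (simp add: i1)
    finally show ?thesis .
  qed
  then have e: "fls_const (\<iota> (inverse 2) * 2) = (1 :: 'b fls)" by simp
  have "x = fls_const (\<iota> (inverse 2) * 2) * x" by (simp only: e mult_1_left)
  also have "\<dots> = fls_const (\<iota> (inverse 2)) * (fls_const 2 * x)"
    by (simp only: mult.assoc[symmetric] fls_const_mult_const)
  also have "fls_const 2 * x = x + x"
    by (simp only: fls_const_numeral mult_2)
  also have "x + x = 0" by (rule assms)
  finally show ?thesis by simp
qed

lemma Qself: assumes "f \<in> laurent_polys" shows "Q f f = 0"
proof (rule half_cancel)
  have h: "Q f f = - Q f f" by (rule Qanti[OF assms assms])
  have "Q f f + Q f f = Q f f + - Q f f" by (subst (2) h) (rule refl)
  then show "Q f f + Q f f = 0" by (simp only: add.right_inverse)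
qed

lemma Qsum2: assumes "f \<in> laurent_polys" "\<And>x. x \<in> A \<Longrightarrow> g x \<in> laurent_polys"
  shows "Q f (\<Sum>x\<in>A. g x) = (\<Sum>x\<in>A. Q f (g x))"
  using assms(2)
proof (induction A rule: infinite_finite_induct)
  case (insert x F)
  have gx: "g x \<in> laurent_polys" and gF: "(\<Sum>y\<in>F. g y) \<in> laurent_polys"
    using insert.prems by (auto intro!: L_sum)
  have "Q f (\<Sum>y\<in>insert x F. g y) = Q f (g x + (\<Sum>y\<in>F. g y))" using insert.hyps by simp
  also have "\<dots> = Q f (g x) + Q f (\<Sum>y\<in>F. g y)" by (rule Qadd2[OF assms(1) gx gF])
  also have "Q f (\<Sum>y\<in>F. g y) = (\<Sum>y\<in>F. Q f (g y))" using insert.IH insert.prems by auto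
  finally show ?case using insert.hyps by simp
next
  case (infinite A) then show ?case using Q0[OF assms(1)] by simp
next
  case empty then show ?case using Q0[OF assms(1)] by simp
qed

lemma Qsum1: assumes "f \<in> laurent_polys" "\<And>x. x \<in> A \<Longrightarrow> g x \<in> laurent_polys"
  shows "Q (\<Sum>x\<in>A. g x) f = (\<Sum>x\<in>A. Q (g x) f)"
proof -
  have "Q (\<Sum>x\<in>A. g x) f = - Q f (\<Sum>x\<in>A. g x)" by (rule Qanti[OF L_sum[OF assms(2)] assms(1)])
  also have "Q f (\<Sum>x\<in>A. g x) = (\<Sum>x\<in>A. Q f (g x))" by (rule Qsum2[OF assms])
  also have "- (\<Sum>x\<in>A. Q f (g x)) = (\<Sum>x\<in>A. - Q f (g x))" by (rule sum_negf[symmetric])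
  also have "\<dots> = (\<Sum>x\<in>A. Q (g x) f)"
  proof (rule sum.cong[OF refl])
    fix x assume "x \<in> A"
    show "- Q f (g x) = Q (g x) f" using Qanti[OF assms(2)[OF \<open>x \<in> A\<close>] assms(1)] by simp
  qed
  finally show ?thesis .
qed

lemma QY: assumes "g \<in> laurent_polys" shows "Q fls_X_inv g = - (fls_X_inv * fls_X_inv) * Q fls_X g"
proof -
  have "Q (fls_X * fls_X_inv) g = 0" using Qone[OF assms] Qanti[OF L1 assms] by (simp add: X_Xinv)
  then have "Q fls_X g * fls_X_inv + fls_X * Q fls_X_inv g = 0" by (simp add: Qleib1 assms LX LY)
  then have "fls_X_inv * (Q fls_X g * fls_X_inv + fls_X * Q fls_X_inv g) = 0" by simp
  then have "fls_X_inv * fls_X_inv * Q fls_X g + (fls_X * fls_X_inv) * Q fls_X_inv g = 0"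
    by (simp add: algebra_simps)
  then have h2: "fls_X_inv * fls_X_inv * Q fls_X g + Q fls_X_inv g = 0" by (simp only: X_Xinv mult_1_left)
  from minus_unique[OF h2] show ?thesis by simp
qed

lemma QXY: "Q fls_X fls_X_inv = 0"
  using QY[OF LX] Qself[OF LX] Qanti[OF LX LY] by simp

lemma QYY: "Q fls_X_inv fls_X_inv = 0" by (rule Qself[OF LY])

lemma QXYn: "Q fls_X (fls_X_inv ^ n) = 0"
  by (induction n) (simp_all add: Qone LX Qleib2 LY Lpow QXY)

lemma QYYn: "Q fls_X_inv (fls_X_inv ^ n) = 0"
  by (induction n) (simp_all add: Qone LY Qleib2 Lpow QYY)

lemma QYnYn: "Q (fls_X_inv ^ m) (fls_X_inv ^ n) = 0"
proof (induction m)
  case 0 then show ?case using Qone[OF Lpow[OF LY, of n]] Qanti[OF L1 Lpow[OF LY, of n]] by simp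
next
  case (Suc m) then show ?case by (simp add: Qleib1 LY Lpow QYYn)
qed

lemma QYn: assumes "g \<in> laurent_polys"
  shows "Q (fls_X_inv ^ m) g = - (of_nat m * fls_X_inv ^ (m + 1) * Q fls_X g)"
proof (induction m)
  case 0 then show ?case using Qone[OF assms] Qanti[OF L1 assms] by simp
next
  case (Suc m)
  have "Q (fls_X_inv ^ Suc m) g = Q fls_X_inv g * fls_X_inv ^ m + fls_X_inv * Q (fls_X_inv ^ m) g"
    by (simp add: Qleib1 assms LY Lpow)
  also have "\<dots> = - (of_nat (Suc m) * fls_X_inv ^ (Suc m + 1) * Q fls_X g)"
    by (simp add: Suc QY assms algebra_simps)
  finally show ?case .
qed

lemma QXmono: "Q fls_X (fls_const e * fls_X_inv ^ n) = Q fls_X (fls_const e) * fls_X_inv ^ n"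
  by (simp add: Qleib2 LX L_const Lpow LY QXYn)

lemma Qmono:
  "Q (fls_const e * fls_X_inv ^ m) (fls_const d * fls_X_inv ^ n)
   = Q (fls_const e) (fls_const d) * fls_X_inv ^ (m + n)
     - of_nat m * fls_const e * fls_X_inv ^ (m + n + 1) * Q fls_X (fls_const d)
     + of_nat n * fls_const d * fls_X_inv ^ (m + n + 1) * Q fls_X (fls_const e)"
proof -
  have Le: "fls_const e \<in> laurent_polys" by (rule L_const)
  have Ld: "fls_const d \<in> laurent_polys" by (rule L_const)
  have Lm: "(fls_X_inv :: 'b fls) ^ m \<in> laurent_polys" by (rule Lpow[OF LY])
  have Ln: "(fls_X_inv :: 'b fls) ^ n \<in> laurent_polys" by (rule Lpow[OF LY])
  have a: "Q (fls_const e * fls_X_inv ^ m) (fls_const d)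
      = Q (fls_const e) (fls_const d) * fls_X_inv ^ m - fls_const e * (of_nat m * fls_X_inv ^ (m + 1) * Q fls_X (fls_const d))"
    by (simp add: Qleib1 Le Ld Lm QYn)
  have b: "Q (fls_const e * fls_X_inv ^ m) (fls_X_inv ^ n) = of_nat n * fls_X_inv ^ (n + 1) * Q fls_X (fls_const e) * fls_X_inv ^ m"
    using Qanti[OF Ln Le] by (simp add: Qleib1 Le Ln Lm QYnYn QYn)
  show ?thesis
    by (simp add: Qleib2 Lmul Le Ld Lm Ln a b algebra_simps power_add)
qed

end


lemma shift_sum: fixes f :: "nat \<Rightarrow> 'a::comm_monoid_add"
  assumes "f 0 = 0" "f N = 0" shows "(\<Sum>n<N. f n) = (\<Sum>n<N. f (Suc n))"
proof -
  have "(\<Sum>n<Suc N. f n) = f 0 + (\<Sum>n<N. f (Suc n))" by (rule sum.lessThan_Suc_shift)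
  moreover have "(\<Sum>n<Suc N. f n) = (\<Sum>n<N. f n) + f N" by simp
  ultimately show ?thesis using assms by simp
qed

lemma cf_succ: fixes s :: "'k::field_char_0" assumes "s \<noteq> 0"
  shows "cf s (Suc n) * (of_nat (Suc n) * s) = - cf s n"
proof -
  have "cf s (Suc n) * (of_nat (Suc n) * s) = inverse (fact n) * (- inverse s) ^ n * ((- inverse s) * s) * (inverse (of_nat (Suc n)) * of_nat (Suc n))"
    unfolding cf_def by (simp add: mult_ac fact_Suc[of n] del: of_nat_Suc)
  also have "\<dots> = - cf s n" using assms by (simp add: cf_def del: of_nat_Suc)
  finally show ?thesis .
qed


lemma mono_rearr:
  fixes p e d ad dd ae de :: "'b::comm_ring_1"
  shows "fls_const p * fls_X_inv ^ k - of_nat m * fls_const e * fls_X_inv ^ (k + 1) * (fls_const ad * fls_X + fls_const dd)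
      + of_nat n * fls_const d * fls_X_inv ^ (k + 1) * (fls_const ae * fls_X + fls_const de)
   = fls_const (p - of_nat m * e * ad + of_nat n * d * ae) * fls_X_inv ^ k
      + fls_const (of_nat n * d * de - of_nat m * e * dd) * fls_X_inv ^ (k + 1)"
proof -
  have yx: "fls_X_inv ^ (k + 1) * fls_X = (fls_X_inv ^ k :: 'b fls)"
  proof -
    have "fls_X_inv ^ (k + 1) * fls_X = fls_X_inv ^ k * (fls_X * (fls_X_inv :: 'b fls))"
      by (simp add: mult_ac)
    then show ?thesis by (simp add: X_Xinv)
  qed
  have h: "fls_X_inv ^ (k + 1) * (fls_const a * fls_X + fls_const b)
      = fls_const a * fls_X_inv ^ k + fls_const b * (fls_X_inv ^ (k + 1) :: 'b fls)" for a b
  proof -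
    have "fls_X_inv ^ (k + 1) * (fls_const a * fls_X + fls_const b)
       = fls_const a * (fls_X_inv ^ (k + 1) * fls_X) + fls_const b * (fls_X_inv ^ (k + 1) :: 'b fls)"
      by (simp add: algebra_simps)
    then show ?thesis by (simp only: yx)
  qed
  have s1: "fls_const (p - of_nat m * e * ad + of_nat n * d * ae)
     = fls_const p - of_nat m * fls_const e * fls_const ad + of_nat n * fls_const d * fls_const ae"
    by (simp add: fls_of_nat fls_plus_const fls_minus_const)
  have s2: "fls_const (of_nat n * d * de - of_nat m * e * dd)
     = of_nat n * fls_const d * fls_const de - of_nat m * fls_const e * fls_const dd"
    by (simp add: fls_of_nat fls_plus_const fls_minus_const)
  have "fls_const p * fls_X_inv ^ k - of_nat m * fls_const e * fls_X_inv ^ (k + 1) * (fls_const ad * fls_X + fls_const dd)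
      + of_nat n * fls_const d * fls_X_inv ^ (k + 1) * (fls_const ae * fls_X + fls_const de)
    = fls_const p * fls_X_inv ^ k - of_nat m * fls_const e * (fls_X_inv ^ (k + 1) * (fls_const ad * fls_X + fls_const dd))
      + of_nat n * fls_const d * (fls_X_inv ^ (k + 1) * (fls_const ae * fls_X + fls_const de))"
    by (simp only: mult.assoc)
  also have "\<dots> = fls_const p * fls_X_inv ^ k - of_nat m * fls_const e * (fls_const ad * fls_X_inv ^ k + fls_const dd * fls_X_inv ^ (k + 1))
      + of_nat n * fls_const d * (fls_const ae * fls_X_inv ^ k + fls_const de * fls_X_inv ^ (k + 1))"
    by (simp only: h)
  also have "\<dots> = (fls_const p - of_nat m * fls_const e * fls_const ad + of_nat n * fls_const d * fls_const ae) * fls_X_inv ^ k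
      + (of_nat n * fls_const d * fls_const de - of_nat m * fls_const e * fls_const dd) * fls_X_inv ^ (k + 1)"
    by (simp only: algebra_simps)
  finally show ?thesis by (simp only: s1 s2)
qed

locale pl = thl \<iota> \<delta> for \<iota> :: "'k::field_char_0 \<Rightarrow> 'b::comm_ring_1" and \<delta> +
  fixes P :: "'b \<Rightarrow> 'b \<Rightarrow> 'b" and \<alpha> :: "'b \<Rightarrow> 'b" and s :: 'k
    and Py Px :: "'b fls \<Rightarrow> 'b fls \<Rightarrow> 'b fls"
  assumes B: "poisson_on UNIV \<iota> P"
    and alpha: "poisson_derivation \<iota> P \<alpha>"
    and compat: "\<forall>a b. \<delta> (P a b) = P (\<delta> a) b + P a (\<delta> b) + \<alpha> a * \<delta> b - \<delta> a * \<alpha> b"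
    and sne: "s \<noteq> 0"
    and comm: "\<forall>b. \<alpha> (\<delta> b) = \<delta> (\<alpha> b + \<iota> s * b)"
    and Ly: "is_poisson_laurent \<iota> P \<alpha> (\<lambda>_. 0) Py"
    and Lx: "is_poisson_laurent \<iota> P \<alpha> \<delta> Px"
begin

lemma Padd1: "P (a + a') b = P a b + P a' b" and Pscal1: "P (\<iota> c * a) b = \<iota> c * P a b"
  and Panti: "P a b = - P b a" and Pleib2: "P a (b * d) = P a b * d + b * P a d"
  using B unfolding poisson_on_def by blast+

lemma Pscal2: "P a (\<iota> c * b) = \<iota> c * P a b"
  using Panti[of a "\<iota> c * b"] Panti[of b a] by (simp add: Pscal1)

lemma aadd: "\<alpha> (a + b) = \<alpha> a + \<alpha> b" and ascal: "\<alpha> (\<iota> c * a) = \<iota> c * \<alpha> a"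
  using alpha unfolding poisson_derivation_def derivation_def by auto

lemma a0: "\<alpha> 0 = 0"
proof -
  have "\<alpha> 0 = \<alpha> (0 + 0)" by simp
  also have "\<dots> = \<alpha> 0 + \<alpha> 0" by (rule aadd)
  finally show ?thesis by (rule add_cancel_right_right[THEN iffD1])
qed

lemma compat': "\<delta> (P a b) = P (\<delta> a) b + P a (\<delta> b) + \<alpha> a * \<delta> b - \<delta> a * \<alpha> b"
  using compat by blast

lemma comm': "\<alpha> (\<delta> b) = \<delta> (\<alpha> b + \<iota> s * b)" using comm by blast

lemma L3: "\<alpha> ((\<delta> ^^ n) b) = (\<delta> ^^ n) (\<alpha> b) + of_nat n * (\<iota> s * (\<delta> ^^ n) b)"
proof (induction n)
  case 0 then show ?case by simp
next
  case (Suc n)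
  have "\<alpha> ((\<delta> ^^ Suc n) b) = \<delta> (\<alpha> ((\<delta> ^^ n) b) + \<iota> s * (\<delta> ^^ n) b)" by (simp add: comm')
  also have "\<dots> = (\<delta> ^^ Suc n) (\<alpha> b) + of_nat (Suc n) * (\<iota> s * (\<delta> ^^ Suc n) b)"
    by (simp add: Suc dadd dofnat dscal algebra_simps)
  finally show ?case .
qed

lemma L3z: assumes "(\<delta> ^^ n) b = 0" shows "(\<delta> ^^ n) (\<alpha> b) = 0"
  using L3[of n b] assms by (simp add: a0)

lemma brk:
  "(\<delta> ^^ k) (P a b) = (\<Sum>m\<le>k. of_nat (k choose m) *
      (P ((\<delta> ^^ m) a) ((\<delta> ^^ (k - m)) b) - of_nat m * ((\<delta> ^^ m) a * (\<delta> ^^ (k - m)) (\<alpha> b))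
       + of_nat (k - m) * ((\<delta> ^^ m) (\<alpha> a) * (\<delta> ^^ (k - m)) b)))"
proof -
  define G where "G m n = P ((\<delta> ^^ m) a) ((\<delta> ^^ n) b) - of_nat m * ((\<delta> ^^ m) a * (\<delta> ^^ n) (\<alpha> b))
       + of_nat n * ((\<delta> ^^ m) (\<alpha> a) * (\<delta> ^^ n) b)" for m n
  define E where "E m n = \<iota> s * (of_nat m * ((\<delta> ^^ m) a * (\<delta> ^^ (Suc n)) b) - of_nat n * ((\<delta> ^^ (Suc m)) a * (\<delta> ^^ n) b))" for m n
  have step: "\<delta> (G m n) = G (Suc m) n + G m (Suc n) + E m n" for m n
    unfolding G_def E_def
    by (simp add: dadd dsub dofnat dnat dmul compat' L3 algebra_simps)
  have corr: "(\<Sum>m\<le>k. of_nat (k choose m) * E m (k - m)) = 0" for k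
  proof -
    have "(\<Sum>m\<le>k. of_nat (k choose m) * E m (k - m)) = \<iota> s * (\<Sum>m\<le>k. of_nat (k choose m) *
       (of_nat m * ((\<lambda>m n. (\<delta> ^^ m) a * (\<delta> ^^ n) b) m (Suc (k - m))) - of_nat (k - m) * ((\<lambda>m n. (\<delta> ^^ m) a * (\<delta> ^^ n) b) (Suc m) (k - m))))"
      unfolding E_def sum_distrib_left by (intro sum.cong refl) (simp add: mult_ac)
    also have "\<dots> = 0"
      using correction_sum[of k "\<lambda>m n. (\<delta> ^^ m) a * (\<delta> ^^ n) b"] by (simp only: mult_zero_right)
    finally show ?thesis .
  qed
  have "(\<delta> ^^ k) (G 0 0) = (\<Sum>m\<le>k. of_nat (k choose m) * G m (k - m))"
    by (rule pascal[OF step corr])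
  then show ?thesis by (simp add: G_def)
qed

end


sublocale pl \<subseteq> PX: pq \<iota> \<delta> Px
  by unfold_locales (use Lx in \<open>simp add: is_poisson_laurent_def\<close>)

sublocale pl \<subseteq> PY: pq \<iota> \<delta> Py
  by unfold_locales (use Ly in \<open>simp add: is_poisson_laurent_def\<close>)

context pl
begin

lemma PxC: "Px (fls_const a) (fls_const b) = fls_const (P a b)"
  and PxX: "Px fls_X (fls_const b) = fls_const (\<alpha> b) * fls_X + fls_const (\<delta> b)"
  using Lx unfolding is_poisson_laurent_def by auto

lemma PyC: "Py (fls_const a) (fls_const b) = fls_const (P a b)"
  and PyX: "Py fls_X (fls_const b) = fls_const (\<alpha> b) * fls_X"
  using Ly unfolding is_poisson_laurent_def by auto

lemma H1: "Px fls_X (th s b) = th s (\<alpha> b) * fls_X"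
proof -
  obtain N where N: "(\<delta> ^^ N) b = 0" using nilN by blast
  have Na: "(\<delta> ^^ N) (\<alpha> b) = 0" by (rule L3z[OF N])
  define f where "f n = fls_const (\<iota> (cf s n * (of_nat n * s)) * (\<delta> ^^ n) b) * fls_X * fls_X_inv ^ n" for n
  define g where "g n = fls_const (\<iota> (cf s n) * \<delta> ((\<delta> ^^ n) b)) * fls_X_inv ^ n" for n
  have "Px fls_X (th s b) = (\<Sum>n<N. Px fls_X (fls_const (\<iota> (cf s n) * (\<delta> ^^ n) b) * fls_X_inv ^ n))"
    unfolding theta_trunc[OF N] by (rule PX.Qsum2) (auto intro: LX Lmul L_const Lpow LY)
  also have "\<dots> = (\<Sum>n<N. fls_const (\<iota> (cf s n) * (\<delta> ^^ n) (\<alpha> b)) * fls_X_inv ^ n * fls_X + f n + g n)"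
  proof (intro sum.cong refl)
    fix n
    show "Px fls_X (fls_const (\<iota> (cf s n) * (\<delta> ^^ n) b) * fls_X_inv ^ n)
        = fls_const (\<iota> (cf s n) * (\<delta> ^^ n) (\<alpha> b)) * fls_X_inv ^ n * fls_X + f n + g n"
      unfolding PX.QXmono PxX f_def g_def ascal dscal L3
      by (simp add: imul iofnat fls_plus_const[symmetric] algebra_simps)
  qed
  also have "\<dots> = th s (\<alpha> b) * fls_X + ((\<Sum>n<N. f n) + (\<Sum>n<N. g n))"
    unfolding theta_trunc[OF Na] by (simp add: sum.distrib sum_distrib_right)
  also have "(\<Sum>n<N. f n) = (\<Sum>n<N. f (Suc n))"
    by (rule shift_sum) (simp_all add: f_def N i0)
  also have "\<dots> = (\<Sum>n<N. - g n)"
  proof (intro sum.cong refl)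
    fix n
    have "f (Suc n) = fls_const (\<iota> (- cf s n) * \<delta> ((\<delta> ^^ n) b)) * (fls_X * fls_X_inv) * fls_X_inv ^ n"
      unfolding f_def cf_succ[OF sne] by (simp add: mult_ac)
    then show "f (Suc n) = - g n" by (simp add: X_Xinv ineg g_def)
  qed
  finally show ?thesis by (simp add: sum_negf)
qed

end


context pl
begin

lemma P0: "P 0 b = 0" and P0': "P a 0 = 0"
  using Pscal1[of 0 0 b] Pscal2[of a 0 0] by (simp_all add: i0)

lemma H2: "Px (th s a) (th s b) = th s (P a b)"
proof -
  obtain Na where Na: "(\<delta> ^^ Na) a = 0" using nilN by blast
  obtain Nb where Nb: "(\<delta> ^^ Nb) b = 0" using nilN by blast
  define N where "N = Na + Nb"
  have zA: "\<And>m. N \<le> m \<Longrightarrow> (\<delta> ^^ m) a = 0" using Dn_ge[OF Na] by (simp add: N_def)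
  have zB: "\<And>m. N \<le> m \<Longrightarrow> (\<delta> ^^ m) b = 0" using Dn_ge[OF Nb] by (simp add: N_def)
  have zAa: "\<And>m. N \<le> m \<Longrightarrow> (\<delta> ^^ m) (\<alpha> a) = 0" using zA L3z by blast
  have zBa: "\<And>m. N \<le> m \<Longrightarrow> (\<delta> ^^ m) (\<alpha> b) = 0" using zB L3z by blast
  define Ma where "Ma m = fls_const (\<iota> (cf s m) * (\<delta> ^^ m) a) * fls_X_inv ^ m" for m
  define Mb where "Mb n = fls_const (\<iota> (cf s n) * (\<delta> ^^ n) b) * fls_X_inv ^ n" for n
  define G where "G m n = P ((\<delta> ^^ m) a) ((\<delta> ^^ n) b) - of_nat m * ((\<delta> ^^ m) a * (\<delta> ^^ n) (\<alpha> b))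
       + of_nat n * ((\<delta> ^^ m) (\<alpha> a) * (\<delta> ^^ n) b)" for m n
  define T1 where "T1 m n = fls_const (\<iota> (cf s m * cf s n) * G m n) * fls_X_inv ^ (m + n)" for m n
  define T2 where "T2 m n = fls_const (\<iota> (cf s m * cf s n) * (of_nat n * (\<delta> ((\<delta> ^^ m) a) * (\<delta> ^^ n) b)
       - of_nat m * ((\<delta> ^^ m) a * \<delta> ((\<delta> ^^ n) b)))) * fls_X_inv ^ (m + n + 1)" for m n
  define W where "W m n = fls_const (\<iota> (cf s m * cf s n * (of_nat m * of_nat n * - s)) * ((\<delta> ^^ m) a * (\<delta> ^^ n) b))
       * fls_X_inv ^ (m + n)" for m n
  have LMa: "Ma m \<in> laurent_polys" for m unfolding Ma_def by (intro Lmul L_const Lpow LY)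
  have LMb: "Mb n \<in> laurent_polys" for n unfolding Mb_def by (intro Lmul L_const Lpow LY)
  have "Px (th s a) (th s b) = Px (\<Sum>m<N. Ma m) (\<Sum>n<N. Mb n)"
    unfolding theta_trunc[OF zA[OF order_refl]] theta_trunc[OF zB[OF order_refl]] Ma_def Mb_def ..
  also have "\<dots> = (\<Sum>m<N. Px (Ma m) (\<Sum>n<N. Mb n))"
    by (rule PX.Qsum1) (auto intro: L_sum LMa LMb)
  also have "\<dots> = (\<Sum>m<N. \<Sum>n<N. Px (Ma m) (Mb n))"
    by (intro sum.cong refl PX.Qsum2) (auto intro: LMa LMb)
  also have "\<dots> = (\<Sum>m<N. \<Sum>n<N. T1 m n + T2 m n)"
  proof (intro sum.cong refl)
    fix m n
    have ex: "P (\<iota> (cf s m) * (\<delta> ^^ m) a) (\<iota> (cf s n) * (\<delta> ^^ n) b)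
        - of_nat m * (\<iota> (cf s m) * (\<delta> ^^ m) a) * \<alpha> (\<iota> (cf s n) * (\<delta> ^^ n) b)
        + of_nat n * (\<iota> (cf s n) * (\<delta> ^^ n) b) * \<alpha> (\<iota> (cf s m) * (\<delta> ^^ m) a)
        = \<iota> (cf s m * cf s n) * G m n"
      unfolding G_def Pscal1 Pscal2 ascal L3 by (simp add: imul algebra_simps)
    have ey: "of_nat n * (\<iota> (cf s n) * (\<delta> ^^ n) b) * \<delta> (\<iota> (cf s m) * (\<delta> ^^ m) a)
        - of_nat m * (\<iota> (cf s m) * (\<delta> ^^ m) a) * \<delta> (\<iota> (cf s n) * (\<delta> ^^ n) b)
        = \<iota> (cf s m * cf s n) * (of_nat n * (\<delta> ((\<delta> ^^ m) a) * (\<delta> ^^ n) b)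
       - of_nat m * ((\<delta> ^^ m) a * \<delta> ((\<delta> ^^ n) b)))"
      unfolding dscal by (simp add: imul algebra_simps)
    show "Px (Ma m) (Mb n) = T1 m n + T2 m n"
      unfolding Ma_def Mb_def PX.Qmono PxC PxX mono_rearr ex ey T1_def T2_def ..
  qed
  also have "\<dots> = (\<Sum>m<N. \<Sum>n<N. T1 m n) + (\<Sum>m<N. \<Sum>n<N. T2 m n)"
    by (simp add: sum.distrib)
  also have "(\<Sum>m<N. \<Sum>n<N. T1 m n) = th s (P a b)"
  proof -
    have z2: "(\<delta> ^^ (2*N)) (P a b) = 0"
      unfolding brk
    proof (rule sum.neutral, intro ballI)
      fix x assume "x \<in> {..2*N}"
      show "of_nat (2 * N choose x) * (P ((\<delta> ^^ x) a) ((\<delta> ^^ (2 * N - x)) b)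
          - of_nat x * ((\<delta> ^^ x) a * (\<delta> ^^ (2 * N - x)) (\<alpha> b))
          + of_nat (2 * N - x) * ((\<delta> ^^ x) (\<alpha> a) * (\<delta> ^^ (2 * N - x)) b)) = 0"
      proof (cases "N \<le> x")
        case True then show ?thesis by (simp add: zA zAa P0)
      next
        case False then have "N \<le> 2 * N - x" by simp
        then show ?thesis by (simp add: zB zBa P0')
      qed
    qed
    have "(\<Sum>m<N. \<Sum>n<N. T1 m n)
       = (\<Sum>k<2*N. fls_const (\<Sum>m\<le>k. \<iota> (cf s m * cf s (k - m)) * G m (k - m)) * fls_X_inv ^ k)"
      unfolding T1_def by (rule dsum_gen) (auto simp: G_def zA zB zAa zBa P0 P0')
    also have "\<dots> = (\<Sum>k<2*N. fls_const (\<iota> (cf s k) * (\<delta> ^^ k) (P a b)) * fls_X_inv ^ k)"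
    proof (intro sum.cong refl arg_cong2[where f="(*)"] arg_cong[where f=fls_const])
      fix k
      have "(\<Sum>m\<le>k. \<iota> (cf s m * cf s (k - m)) * G m (k - m))
          = (\<Sum>m\<le>k. \<iota> (cf s k) * (of_nat (k choose m) * G m (k - m)))"
        by (intro sum.cong refl) (simp add: coef_mult mult.assoc)
      also have "\<dots> = \<iota> (cf s k) * (\<delta> ^^ k) (P a b)"
        by (simp add: brk G_def sum_distrib_left)
      finally show "(\<Sum>m\<le>k. \<iota> (cf s m * cf s (k - m)) * G m (k - m)) = \<iota> (cf s k) * (\<delta> ^^ k) (P a b)" .
    qed
    also have "\<dots> = th s (P a b)" using theta_trunc[OF z2] by simp
    finally show ?thesis .
  qed
  also have "(\<Sum>m<N. \<Sum>n<N. T2 m n) = 0"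
  proof -
    have c1: "cf s (Suc m) * cf s n * (of_nat (Suc m) * of_nat n * - s) = cf s m * cf s n * of_nat n" for m n
    proof -
      have "cf s (Suc m) * cf s n * (of_nat (Suc m) * of_nat n * - s)
          = - (cf s (Suc m) * (of_nat (Suc m) * s)) * (cf s n * of_nat n)" by (simp add: algebra_simps)
      also have "\<dots> = cf s m * cf s n * of_nat n" unfolding cf_succ[OF sne] by (simp add: mult_ac)
      finally show ?thesis .
    qed
    have c2: "cf s m * cf s (Suc n) * (of_nat m * of_nat (Suc n) * - s) = cf s m * cf s n * of_nat m" for m n
    proof -
      have "cf s m * cf s (Suc n) * (of_nat m * of_nat (Suc n) * - s)
          = - (cf s (Suc n) * (of_nat (Suc n) * s)) * (cf s m * of_nat m)" by (simp add: algebra_simps)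
      also have "\<dots> = cf s m * cf s n * of_nat m" unfolding cf_succ[OF sne] by (simp add: mult_ac)
      finally show ?thesis .
    qed
    have t2: "T2 m n = W (Suc m) n - W m (Suc n)" for m n
    proof -
      have "W (Suc m) n = fls_const (\<iota> (cf s m * cf s n * of_nat n) * (\<delta> ((\<delta> ^^ m) a) * (\<delta> ^^ n) b)) * fls_X_inv ^ (m + n + 1)"
        unfolding W_def c1 by simp
      moreover have "W m (Suc n) = fls_const (\<iota> (cf s m * cf s n * of_nat m) * ((\<delta> ^^ m) a * \<delta> ((\<delta> ^^ n) b))) * fls_X_inv ^ (m + n + 1)"
        unfolding W_def c2 by simp
      ultimately show ?thesis unfolding T2_def
        by (simp add: imul iofnat fls_minus_const[symmetric] algebra_simps)
    qed
    have s1: "(\<Sum>m<N. \<Sum>n<N. W (Suc m) n) = (\<Sum>m<N. \<Sum>n<N. W m n)"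
      by (rule shift_sum[symmetric]) (simp_all add: W_def zA i0)
    have s2: "(\<Sum>m<N. \<Sum>n<N. W m (Suc n)) = (\<Sum>m<N. \<Sum>n<N. W m n)"
      by (intro sum.cong refl shift_sum[symmetric]) (simp_all add: W_def zB i0)
    show ?thesis by (simp add: t2 sum_subtractf s1 s2)
  qed
  finally show ?thesis by simp
qed

end


context pl
begin

definition R where "R f g = T (- s) (Px (T s f) (T s g))"

lemma R_der: assumes "f \<in> laurent_polys" shows "der_on (R f)"
  unfolding der_on_def R_def
proof (intro ballI conjI)
  fix g h :: "'b fls" assume g: "g \<in> laurent_polys" and h: "h \<in> laurent_polys"
  have Lf: "T s f \<in> laurent_polys" "T s g \<in> laurent_polys" "T s h \<in> laurent_polys" by (rule Th_L)+
  show "T (- s) (Px (T s f) (T s (g + h))) = T (- s) (Px (T s f) (T s g)) + T (- s) (Px (T s f) (T s h))"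
    by (simp add: Th_add[OF g h] PX.Qadd2 Lf Th_add PX.Qc)
  show "T (- s) (Px (T s f) (T s (g * h))) = T (- s) (Px (T s f) (T s g)) * h + g * T (- s) (Px (T s f) (T s h))"
    by (simp add: Th_mult[OF g h] PX.Qleib2 Lf Th_add Th_mult PX.Qc Lmul Th_inv g h)
qed

lemma Py_der: assumes "f \<in> laurent_polys" shows "der_on (Py f)"
  unfolding der_on_def using assms by (simp add: PY.Qadd2 PY.Qleib2)

lemma R_anti: assumes "f \<in> laurent_polys" "g \<in> laurent_polys" shows "R f g = - R g f"
  unfolding R_def using PX.Qanti[OF Th_L Th_L, of s f s g] by (simp add: Th_neg PX.Qc Th_L)

lemma R_CC: "R (fls_const a) (fls_const b) = Py (fls_const a) (fls_const b)"
  unfolding R_def Th_const H2 PyC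
  using Th_inv[OF L_const, of s "P a b"] by (simp add: Th_const)

lemma R_XC: "R fls_X (fls_const b) = Py fls_X (fls_const b)"
proof -
  have "T s (fls_const (\<alpha> b) * fls_X) = th s (\<alpha> b) * fls_X"
    by (simp add: Th_mult L_const LX Th_const Th_X)
  then have "T (- s) (th s (\<alpha> b) * fls_X) = fls_const (\<alpha> b) * fls_X"
    using Th_inv[OF Lmul[OF L_const LX], of s "\<alpha> b"] by simp
  then show ?thesis unfolding R_def Th_const Th_X H1 PyX .
qed

lemma R_XX: "R fls_X fls_X = Py fls_X fls_X"
  unfolding R_def Th_X by (simp add: PX.Qself PY.Qself LX Th_0)

lemma R_CX: "R (fls_const a) fls_X = Py (fls_const a) fls_X"
  using R_anti[OF L_const LX, of a] R_XC[of a] PY.Qanti[OF L_const LX, of a] by simp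

lemma R_gen1: assumes "g \<in> laurent_polys"
  shows "R (fls_const a) g = Py (fls_const a) g" and "R fls_X g = Py fls_X g"
proof -
  show "R (fls_const a) g = Py (fls_const a) g"
    by (rule der_unique[OF R_der[OF L_const] Py_der[OF L_const] _ _ assms]) (simp_all add: R_CC R_CX)
  show "R fls_X g = Py fls_X g"
    by (rule der_unique[OF R_der[OF LX] Py_der[OF LX] _ _ assms]) (simp_all add: R_XC R_XX)
qed

lemma R_Py: assumes "f \<in> laurent_polys" "g \<in> laurent_polys" shows "R f g = Py f g"
proof (rule der_unique[OF R_der[OF assms(1)] Py_der[OF assms(1)] _ _ assms(2)])
  fix b
  show "R f (fls_const b) = Py f (fls_const b)"
    using R_anti[OF assms(1) L_const, of b] R_gen1(1)[OF assms(1), of b] PY.Qanti[OF assms(1) L_const, of b] by simp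
next
  show "R f fls_X = Py f fls_X"
    using R_anti[OF assms(1) LX] R_gen1(2)[OF assms(1)] PY.Qanti[OF assms(1) LX] by simp
qed

lemma Th_poisson: assumes "f \<in> laurent_polys" "g \<in> laurent_polys"
  shows "T s (Py f g) = Px (T s f) (T s g)"
proof -
  have "T s (Py f g) = T s (R f g)" by (simp add: R_Py assms)
  also have "\<dots> = Px (T s f) (T s g)" unfolding R_def by (rule Th_inv'[OF PX.Qc[OF Th_L Th_L]])
  finally show ?thesis .
qed

lemma Th_iso: "poisson_iso_on laurent_polys (\<lambda>c. fls_const (\<iota> c)) Py Px (T s)"
  unfolding poisson_iso_on_def
proof (intro conjI ballI allI)
  show "bij_betw (T s) laurent_polys laurent_polys"
    by (rule bij_betw_byWitness[where f'="T (- s)"]) (auto simp: Th_inv Th_inv' Th_L)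
qed (simp_all add: Th_1 Th_add Th_mult Th_scal Th_poisson)

end


theorem theorem3p8:
  fixes \<iota> :: "'k::field_char_0 \<Rightarrow> 'b::comm_ring_1"
    and P :: "'b \<Rightarrow> 'b \<Rightarrow> 'b"
    and \<alpha> \<delta> :: "'b \<Rightarrow> 'b"
    and s :: 'k
    and Py Px :: "'b fls \<Rightarrow> 'b fls \<Rightarrow> 'b fls"
  assumes hom: "k_algebra_hom \<iota>"
    and B: "poisson_on UNIV \<iota> P"
    and alpha: "poisson_derivation \<iota> P \<alpha>"
    and delta: "derivation \<iota> \<delta>"
    and compat: "\<forall>a b. \<delta> (P a b) = P (\<delta> a) b + P a (\<delta> b) + \<alpha> a * \<delta> b - \<delta> a * \<alpha> b"
    and nil: "locally_nilpotent \<delta>"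
    and s: "s \<noteq> 0"
    and comm: "\<forall>b. \<alpha> (\<delta> b) = \<delta> (\<alpha> b + \<iota> s * b)"
    and Ly: "is_poisson_laurent \<iota> P \<alpha> (\<lambda>_. 0) Py"
    and Lx: "is_poisson_laurent \<iota> P \<alpha> \<delta> Px"
  shows "\<exists>\<Theta>. poisson_iso_on laurent_polys (\<lambda>c. fls_const (\<iota> c)) Py Px \<Theta>
            \<and> (\<forall>b. \<Theta> (fls_const b) = theta_map \<iota> \<delta> s b) \<and> \<Theta> fls_X = fls_X
            \<and> (\<forall>\<Theta>'. poisson_iso_on laurent_polys (\<lambda>c. fls_const (\<iota> c)) Py Px \<Theta>'
                   \<and> (\<forall>b. \<Theta>' (fls_const b) = theta_map \<iota> \<delta> s b) \<and> \<Theta>' fls_X = fls_X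
                   \<longrightarrow> (\<forall>f\<in>laurent_polys. \<Theta>' f = \<Theta> f))"
proof -
  have SL: "subring_on (laurent_polys :: 'b fls set)"
    using Lx unfolding is_poisson_laurent_def poisson_on_def by blast
  interpret pl \<iota> \<delta> P \<alpha> s Py Px
  proof unfold_locales
  qed (rule hom delta nil SL B alpha compat s comm Ly Lx)+
  show ?thesis
  proof (intro exI conjI allI impI ballI)
    show "poisson_iso_on laurent_polys (\<lambda>c. fls_const (\<iota> c)) Py Px (Th \<iota> \<delta> s)"
      by (rule Th_iso)
  next
    fix b show "Th \<iota> \<delta> s (fls_const b) = theta_map \<iota> \<delta> s b" by (rule Th_const)
  next
    show "Th \<iota> \<delta> s fls_X = fls_X" by (rule Th_X)
  next
    fix \<Theta>' :: "'b fls \<Rightarrow> 'b fls" and f :: "'b fls"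
    assume H: "poisson_iso_on laurent_polys (\<lambda>c. fls_const (\<iota> c)) Py Px \<Theta>'
                   \<and> (\<forall>b. \<Theta>' (fls_const b) = theta_map \<iota> \<delta> s b) \<and> \<Theta>' fls_X = fls_X"
      and f: "f \<in> laurent_polys"
    show "\<Theta>' f = Th \<iota> \<delta> s f"
    proof (rule hom_unique[OF _ _ _ _ f])
      show "\<forall>f\<in>laurent_polys. \<forall>g\<in>laurent_polys. \<Theta>' (f + g) = \<Theta>' f + \<Theta>' g \<and> \<Theta>' (f * g) = \<Theta>' f * \<Theta>' g"
        using H unfolding poisson_iso_on_def by blast
      show "\<Theta>' 1 = 1" using H unfolding poisson_iso_on_def by blast
      show "\<And>b. \<Theta>' (fls_const b) = theta_map \<iota> \<delta> s b" using H by blast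
      show "\<Theta>' fls_X = fls_X" using H by blast
    qed
  qed
qed

end
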